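(* Let $K$ and $K'$ be two non-degenerate CMIs, with $\mathrm{can}(\mathrm{pur}(K))=(C,\langle\mathbb I_K,\mathbb I_K,P_i,1\le i\le t\rangle)$ and $\mathrm{can}(\mathrm{pur}(K'))=(C',\langle\mathbb I_{K'},\mathbb I_{K'},P'_j,1\le j\le s\rangle)$. Let $K''=R_K^{K'}$ and $\mathrm{can}(\mathrm{pur}(K''))=(C'',\langle\mathbb I_{K''},\mathbb I_{K''},P''_j,1\le j\le r\rangle)$. Then: (i) $C''\cap\mathbb I_K=\emptyset$ and $P''_j\cap\mathbb I_K=\emptyset$ for $1\le j\le r$; (ii) if $K$ implies $K'$, then $\mathbb I_{K''}=\emptyset$ and $\mathrm{can}(\mathrm{pur}(K''))=(C'',\langle P''_j,1\le j\le r\rangle)$; (iii) if $K''\ne(\cdot,\langle\ \rangle)$, then $r\ge2$.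
   Context: Setting: $X_1,\dots,X_n$ jointly distributed discrete random variables with $H(X_i)<\infty$; distribution unspecified. $X_\alpha=(X_i,i\in\alpha)$, $X_\emptyset$ constant. A CMI is $K=(C,\langle Q_1,\dots,Q_k\rangle)$, $k\ge0$, $C\subseteq\{1,\dots,n\}$, $\langle\cdot\rangle$ an unordered multiset of subsets; valid (for a given distribution) if $\sum_iH(X_{Q_i}|X_C)-H(X_{Q_1},\dots,X_{Q_k}|X_C)=0$. Empty members may be deleted. Degenerate = valid for every distribution, written $(\cdot,\langle\ \rangle)$. "$K$ implies $K'$": for every joint distribution, if $K$ is valid then $K'$ is valid. $\mathrm{pur}(K)=(C,\langle Q_i\setminus C:Q_i\setminus C\ne\emptyset\rangle)$. For pure $K$: $\mathbb I_K$ = indices lying in at least two members of the collection if $k\ge2$, else $\emptyset$; $P_1,\dots,P_t$ the nonempty sets among $Q_i\setminus\mathbb I_K$; $\mathrm{can}(K)=(\cdot,\langle\ \rangle)$ if $k\le1$, $(C,\langle\mathbb I_K,\mathbb I_K\rangle)$ if $k\ge2,\mathbb I_K\ne\emptyset,t\le1$, $(C,\langle P_1..P_t\rangle)$ if $k\ge2,\mathbb I_K=\emptyset$, $(C,\langle\mathbb I_K,\mathbb I_K,P_1..P_t\rangle)$ if $k\ge2,\mathbb I_K\ne\emptyset,t\ge2$. For general $K$, $\mathbb I_K$ is the repeated-index set of $\mathrm{pur}(K)$; general-form notation omits copies of $\mathbb I_K$ when empty and uses $t=0$ for $(C,\langle\mathbb I_K,\mathbb I_K\rangle)$ (so $t\ne1$).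 $R_K^{K'}$: with $D=\mathbb I_{K'}\setminus\mathbb I_K$ and $T_1,\dots,T_u$ the nonempty sets among $P'_j\setminus\mathbb I_K$: $R_K^{K'}=(\cdot,\langle\ \rangle)$ if $D=\emptyset,u\le1$; $(C'\setminus\mathbb I_K,\langle T_1..T_u\rangle)$ if $D=\emptyset,u\ge2$; $(C'\setminus\mathbb I_K,\langle D,D\rangle)$ if $D\ne\emptyset,u\le1$; $(C'\setminus\mathbb I_K,\langle D,D,T_1..T_u\rangle)$ if $D\ne\emptyset,u\ge2$. *)

theory Defs
  imports "HOL-Probability.Probability_Mass_Function" "HOL-Library.Multiset"
begin

text \<open>A joint distribution of the discrete random variables X_1,...,X_n is a pmf on
  outcome vectors nat => nat (coordinate i is the value of X_i; any countable alphabet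
  can be relabelled into nat without changing entropies).  Coordinates outside 1..n
  are irrelevant.\<close>

type_synonym outcome = "nat \<Rightarrow> nat"

definition ent_term :: "'b pmf \<Rightarrow> 'b \<Rightarrow> real" where
  "ent_term q x = - pmf q x * log 2 (pmf q x)"

definition entropy_pmf :: "'b pmf \<Rightarrow> real" where
  "entropy_pmf q = (\<Sum>\<^sub>\<infinity>x\<in>set_pmf q. ent_term q x)"

definition finite_entropy :: "'b pmf \<Rightarrow> bool" where
  "finite_entropy q \<longleftrightarrow> (ent_term q) summable_on set_pmf q"

text \<open>Distribution of X_alpha = (X_i, i in alpha); X_{} is constant.\<close>
definition marg :: "outcome pmf \<Rightarrow> nat set \<Rightarrow> outcome pmf" where
  "marg p \<alpha> = map_pmf (\<lambda>\<omega>. restrict \<omega> \<alpha>) p"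

definition H :: "outcome pmf \<Rightarrow> nat set \<Rightarrow> real" where
  "H p \<alpha> = entropy_pmf (marg p \<alpha>)"

definition condH :: "outcome pmf \<Rightarrow> nat set \<Rightarrow> nat set \<Rightarrow> real" where
  "condH p A C = H p (A \<union> C) - H p C"

definition admissible :: "nat \<Rightarrow> outcome pmf \<Rightarrow> bool" where
  "admissible n p \<longleftrightarrow> (\<forall>i\<in>{1..n}. finite_entropy (marg p {i}))"

text \<open>A CMI (C, <Q_1,...,Q_k>) : conditioning set and multiset of subsets.\<close>
type_synonym cmi = "nat set \<times> nat set multiset"

definition wf_cmi :: "nat \<Rightarrow> cmi \<Rightarrow> bool" where
  "wf_cmi n K \<longleftrightarrow> fst K \<subseteq> {1..n} \<and> (\<forall>Q\<in>#snd K. Q \<subseteq> {1..n})"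

definition valid :: "outcome pmf \<Rightarrow> cmi \<Rightarrow> bool" where
  "valid p K \<longleftrightarrow>
     (\<Sum>Q\<in>#snd K. condH p Q (fst K)) - condH p (\<Union>(set_mset (snd K))) (fst K) = 0"

definition degenerate :: "nat \<Rightarrow> cmi \<Rightarrow> bool" where
  "degenerate n K \<longleftrightarrow> (\<forall>p. admissible n p \<longrightarrow> valid p K)"

definition cmi_implies :: "nat \<Rightarrow> cmi \<Rightarrow> cmi \<Rightarrow> bool" where
  "cmi_implies n K K' \<longleftrightarrow> (\<forall>p. admissible n p \<longrightarrow> valid p K \<longrightarrow> valid p K')"

text \<open>The syntactic representative of the degenerate CMI (.,< >).\<close>
definition degCMI :: cmi where
  "degCMI = ({}, {#})"

definition pur :: "cmi \<Rightarrow> cmi" where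
  "pur K = (fst K, filter_mset (\<lambda>Q. Q \<noteq> {}) (image_mset (\<lambda>Q. Q - fst K) (snd K)))"

definition IIcoll :: "nat set multiset \<Rightarrow> nat set" where
  "IIcoll M = (if 2 \<le> size M then {i. 2 \<le> size (filter_mset (\<lambda>Q. i \<in> Q) M)} else {})"

definition II :: "cmi \<Rightarrow> nat set" where
  "II K = IIcoll (snd (pur K))"

definition can :: "cmi \<Rightarrow> cmi" where
  "can K = (let M = snd K; I = IIcoll M;
               Ps = filter_mset (\<lambda>P. P \<noteq> {}) (image_mset (\<lambda>Q. Q - I) M)
            in if size M \<le> 1 then degCMI
               else if I = {} then (fst K, Ps)
               else if size Ps \<le> 1 then (fst K, {#I, I#})
               else (fst K, {#I, I#} + Ps))"

text \<open>The sets P_1..P_t in the general-form notation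
  can(pur(K)) = (C, <I_K, I_K, P_1, ..., P_t>): the members of can(pur(K)) other than
  the two copies of I_K (none when I_K is empty).\<close>
definition genP :: "cmi \<Rightarrow> nat set multiset" where
  "genP K = (let M = snd (can (pur K)) in if II K = {} then M else M - {#II K, II K#})"

definition R :: "cmi \<Rightarrow> cmi \<Rightarrow> cmi" where
  "R K K' = (let I = II K; D = II K' - I; C' = fst (can (pur K'));
                Ts = filter_mset (\<lambda>T. T \<noteq> {}) (image_mset (\<lambda>P. P - I) (genP K'))
             in if D = {} \<and> size Ts \<le> 1 then degCMI
                else if D = {} then (C' - I, Ts)
                else if size Ts \<le> 1 then (C' - I, {#D, D#})
                else (C' - I, {#D, D#} + Ts))"

end

theory Submission imports Defs begin

lemma entropy_unif:
  assumes "finite T" "T \<noteq> {}"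
  shows "entropy_pmf (pmf_of_set T) = log 2 (card T)"
proof -
  have c: "card T > 0" using assms by (simp add: card_gt_0_iff)
  have "entropy_pmf (pmf_of_set T) = (\<Sum>x\<in>T. - (1 / card T) * log 2 (1 / card T))"
    unfolding entropy_pmf_def ent_term_def using assms
    by (simp add: indicator_def)
  also have "\<dots> = - log 2 (1 / card T)" using c by simp
  also have "\<dots> = log 2 (card T)" using c by (simp add: log_divide)
  finally show ?thesis .
qed

definition tp :: "nat \<Rightarrow> outcome pmf" where
  "tp i = pmf_of_set {(\<lambda>_. 0), (\<lambda>j. if j = i then 1 else 0)}"

lemma H_tp: "H (tp i) \<alpha> = (if i \<in> \<alpha> then 1 else 0)"
proof (cases "i \<in> \<alpha>")
  case True
  let ?S = "{(\<lambda>_. 0::nat), (\<lambda>j. if j = i then 1 else 0)}"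
  have ne: "(\<lambda>_. 0::nat) \<noteq> (\<lambda>j. if j = i then 1 else 0)" by (metis zero_neq_one)
  have inj: "inj_on (\<lambda>\<omega>. restrict \<omega> \<alpha>) ?S"
    using True by (auto simp: inj_on_def restrict_def fun_eq_iff split: if_splits)
  have "marg (tp i) \<alpha> = pmf_of_set ((\<lambda>\<omega>. restrict \<omega> \<alpha>) ` ?S)"
    unfolding marg_def tp_def by (rule map_pmf_of_set_inj[OF inj]) auto
  moreover have "card ((\<lambda>\<omega>. restrict \<omega> \<alpha>) ` ?S) = 2"
    using inj ne by (simp add: card_image)
  ultimately show ?thesis using True unfolding H_def by (simp add: entropy_unif)
next
  case False
  have "marg (tp i) \<alpha> = map_pmf (\<lambda>_. restrict (\<lambda>_. 0::nat) \<alpha>) (tp i)"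
    unfolding marg_def tp_def
    by (rule map_pmf_cong) (use False in \<open>auto simp: restrict_def fun_eq_iff\<close>)
  also have "\<dots> = pmf_of_set {restrict (\<lambda>_. 0::nat) \<alpha>}"
    by (simp add: pmf_of_set_singleton)
  finally show ?thesis using False unfolding H_def by (simp add: entropy_unif)
qed

lemma condH_tp: "condH (tp i) A C = (if i \<in> A \<and> i \<notin> C then 1 else 0)"
  unfolding condH_def H_tp by auto

lemma adm_tp: "admissible n (tp i)"
  unfolding admissible_def finite_entropy_def marg_def tp_def by simp


definition cnt :: "nat \<Rightarrow> nat set multiset \<Rightarrow> nat" where
  "cnt j M = size (filter_mset (\<lambda>Q. j \<in> Q) M)"

lemma cnt_zero_iff: "cnt j M = 0 \<longleftrightarrow> j \<notin> \<Union>(set_mset M)"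
  unfolding cnt_def by (induction M) auto

lemma cnt_le_size: "cnt j M \<le> size M"
  unfolding cnt_def by (rule size_filter_mset_lesseq)

lemma sum_tp: "(\<Sum>Q\<in>#M. condH (tp i) Q C) = (if i \<notin> C then real (cnt i M) else 0)"
  by (induction M) (auto simp: condH_tp cnt_def)

lemma valid_tp: "valid (tp i) K \<longleftrightarrow> i \<in> fst K \<or> cnt i (snd K) \<le> 1"
proof (cases "i \<in> fst K")
  case True
  have s: "(\<Sum>Q\<in>#snd K. condH (tp i) Q (fst K)) = 0"
    by (subst sum_tp) (use True in simp)
  show ?thesis using True unfolding valid_def s unfolding condH_tp by simp
next
  case False
  have z: "cnt i (snd K) = 0 \<longleftrightarrow> i \<notin> \<Union>(set_mset (snd K))" by (rule cnt_zero_iff)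
  have "valid (tp i) K \<longleftrightarrow> real (cnt i (snd K)) - (if i \<in> \<Union>(set_mset (snd K)) then 1 else 0) = 0"
  proof -
    have s: "(\<Sum>Q\<in>#snd K. condH (tp i) Q (fst K)) = real (cnt i (snd K))"
      by (subst sum_tp) (use False in simp)
    show ?thesis using False unfolding valid_def s unfolding condH_tp by simp
  qed
  also have "\<dots> \<longleftrightarrow> cnt i (snd K) \<le> 1"
  proof (cases "cnt i (snd K) = 0")
    case True then show ?thesis using z by simp
  next
    case c: False then have "i \<in> \<Union>(set_mset (snd K))" using z by simp
    then show ?thesis using c by auto
  qed
  finally show ?thesis using False by simp
qed

lemma cnt_pur: "i \<notin> fst K \<Longrightarrow> cnt i (snd (pur K)) = cnt i (snd K)"
proof -
  assume a: "i \<notin> fst K"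
  have "\<And>M. cnt i (filter_mset (\<lambda>Q. Q \<noteq> {}) (image_mset (\<lambda>Q. Q - fst K) M)) = cnt i M"
  proof -
    fix M show "cnt i (filter_mset (\<lambda>Q. Q \<noteq> {}) (image_mset (\<lambda>Q. Q - fst K) M)) = cnt i M"
      by (induction M) (use a in \<open>auto simp: cnt_def\<close>)
  qed
  then show ?thesis unfolding pur_def by simp
qed

lemma cnt_pur_in: "i \<in> fst K \<Longrightarrow> cnt i (snd (pur K)) = 0"
  unfolding cnt_zero_iff pur_def by auto

lemma II_iff: "i \<in> II K \<longleftrightarrow> 2 \<le> size (snd (pur K)) \<and> 2 \<le> cnt i (snd (pur K))"
  unfolding II_def IIcoll_def cnt_def by auto

lemma implies_II: "cmi_implies n K K' \<Longrightarrow> II K' \<subseteq> II K"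
proof
  fix i assume imp: "cmi_implies n K K'" and iK': "i \<in> II K'"
  show "i \<in> II K"
  proof (rule ccontr)
    assume iK: "i \<notin> II K"
    have "valid (tp i) K"
    proof (cases "i \<in> fst K")
      case False
      have "cnt i (snd (pur K)) \<le> 1"
        using iK cnt_le_size[of i "snd (pur K)"] unfolding II_iff by linarith
      then show ?thesis using False cnt_pur unfolding valid_tp by simp
    qed (simp add: valid_tp)
    moreover have "\<not> valid (tp i) K'"
    proof -
      have "i \<notin> fst K'" using iK' cnt_pur_in[of i K'] unfolding II_iff by auto
      then show ?thesis using iK' cnt_pur[of i K'] unfolding valid_tp II_iff by simp
    qed
    ultimately show False using imp adm_tp unfolding cmi_implies_def by blast
  qed
qed

lemma cnt_image_le: "(\<And>Q. f Q \<subseteq> Q) \<Longrightarrow> cnt j (image_mset f M) \<le> cnt j M"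
  by (induction M) (auto simp: cnt_def)

lemma cnt_filter_le: "cnt j (filter_mset P M) \<le> cnt j M"
  by (induction M) (auto simp: cnt_def)

lemma cnt_diff_le: "cnt j (M - N) \<le> cnt j M"
  unfolding cnt_def by (intro size_mset_mono multiset_filter_mono) simp

lemma IIcoll_empty:
  assumes "\<And>j. cnt j M \<le> 1" shows "IIcoll M = {}"
proof -
  have "\<not> 2 \<le> size (filter_mset (\<lambda>Q. j \<in> Q) M)" for j
    using assms[of j] unfolding cnt_def by linarith
  then show ?thesis unfolding IIcoll_def by auto
qed

lemma genP_cnt: "cnt j (genP X) \<le> 1"
proof -
  define M where "M = snd (pur X)"
  define I where "I = IIcoll M"
  define Ps where "Ps = filter_mset (\<lambda>P. P \<noteq> {}) (image_mset (\<lambda>Q. Q - I) M)"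
  have IIX: "II X = I" unfolding II_def I_def M_def ..
  have Ps1: "cnt j Ps \<le> 1" if s: "2 \<le> size M"
  proof (cases "j \<in> I")
    case True
    then have "cnt j Ps = 0" unfolding Ps_def cnt_zero_iff by auto
    then show ?thesis by simp
  next
    case False
    then have "cnt j M \<le> 1" using s unfolding I_def IIcoll_def cnt_def by auto
    moreover have "cnt j Ps \<le> cnt j M" unfolding Ps_def
      using cnt_filter_le cnt_image_le[of "\<lambda>Q. Q - I"] by (meson Diff_subset order_trans)
    ultimately show ?thesis by simp
  qed
  show ?thesis
  proof (cases "size M \<le> 1")
    case True
    then have "I = {}" unfolding I_def IIcoll_def by auto
    then show ?thesis using True unfolding genP_def can_def Let_def IIX
      by (simp add: M_def[symmetric] degCMI_def cnt_def)
  next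
    case False
    then have s: "2 \<le> size M" by simp
    have g: "genP X = (if I = {} then Ps else if size Ps \<le> 1 then {#} else Ps)"
    proof -
      have c: "can (pur X) = (if I = {} then (fst (pur X), Ps) else if size Ps \<le> 1 then (fst (pur X), {#I, I#})
               else (fst (pur X), {#I, I#} + Ps))"
        unfolding can_def Let_def M_def[symmetric] I_def[symmetric] Ps_def[symmetric]
        by (rule if_not_P[OF False])
      show ?thesis unfolding genP_def Let_def IIX c by simp
    qed
    show ?thesis using Ps1[OF s] unfolding g by (simp add: cnt_def)
  qed
qed


lemma IIcoll_sub: "IIcoll M \<subseteq> \<Union>(set_mset M)"
proof
  fix j assume "j \<in> IIcoll M"
  then have "2 \<le> cnt j M" unfolding IIcoll_def cnt_def by (simp split: if_splits)
  then have "cnt j M \<noteq> 0" by simp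
  then show "j \<in> \<Union>(set_mset M)" using cnt_zero_iff[of j M] by simp
qed

lemma pur_sub: "P \<in># snd (pur X) \<Longrightarrow> P \<subseteq> \<Union>(set_mset (snd X))"
  unfolding pur_def by auto

lemma can_sub: "P \<in># snd (can Y) \<Longrightarrow> P \<subseteq> \<Union>(set_mset (snd Y))"
  using IIcoll_sub[of "snd Y"]
  unfolding can_def Let_def degCMI_def by (auto split: if_splits)

lemma genP_sub: "P \<in># genP X \<Longrightarrow> P \<subseteq> \<Union>(set_mset (snd X))"
proof -
  assume "P \<in># genP X"
  then have "P \<in># snd (can (pur X))" unfolding genP_def Let_def
    by (auto split: if_splits dest: in_diffD)
  then show ?thesis using can_sub pur_sub by blast
qed

lemma fst_can_pur: "fst (can (pur X)) \<subseteq> fst X"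
  unfolding can_def Let_def degCMI_def pur_def by auto

lemma R_disj: "fst (R K K') \<inter> II K = {}" "Q \<in># snd (R K K') \<Longrightarrow> Q \<inter> II K = {}"
  unfolding R_def Let_def degCMI_def by (auto split: if_splits)

lemma cnt_pur_le: "cnt j (snd (pur X)) \<le> cnt j (snd X)"
  unfolding pur_def using cnt_filter_le cnt_image_le[of "\<lambda>Q. Q - fst X"]
  by (simp, meson Diff_subset order_trans)

lemma sum_pur: "(\<Sum>Q\<in>#M. condH p Q C) = (\<Sum>Q\<in># filter_mset (\<lambda>Q. Q \<noteq> {}) (image_mset (\<lambda>Q. Q - C) M). condH p Q C)"
proof (induction M)
  case (add x M)
  have e: "condH p x C = condH p (x - C) C" unfolding condH_def by (simp add: Un_Diff_cancel2)
  have z: "condH p {} C = 0" unfolding condH_def by simp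
  show ?case
  proof (cases "x - C = {}")
    case True
    have h: "condH p (x - C) C = 0" using z True by metis
    then show ?thesis using add e True by simp
  next
    case False
    then show ?thesis using add e by simp
  qed
qed simp

lemma degen_small: "size (snd (pur X)) \<le> 1 \<Longrightarrow> degenerate n X"
proof -
  assume s: "size (snd (pur X)) \<le> 1"
  have u: "\<Union>(set_mset (snd X)) \<union> fst X = \<Union>(set_mset (snd (pur X))) \<union> fst X"
    unfolding pur_def by auto
  have "valid p X" for p
  proof -
    have sp: "(\<Sum>Q\<in>#snd X. condH p Q (fst X)) = (\<Sum>Q\<in>#snd (pur X). condH p Q (fst X))"
      unfolding pur_def by (simp add: sum_pur[where M="snd X" and p=p and C="fst X"])
    have cu: "condH p (\<Union>(set_mset (snd X))) (fst X) = condH p (\<Union>(set_mset (snd (pur X)))) (fst X)"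
      unfolding condH_def u ..
    show ?thesis
    proof (cases "snd (pur X) = {#}")
      case True
      then show ?thesis unfolding valid_def sp cu by (simp add: condH_def)
    next
      case False
      then obtain A where "snd (pur X) = {#A#}" using s
        by (metis One_nat_def le_SucE le_zero_eq size_1_singleton_mset size_eq_0_iff_empty)
      then show ?thesis unfolding valid_def sp cu by simp
    qed
  qed
  then show ?thesis unfolding degenerate_def by blast
qed

theorem mainTheorem16:
  fixes n :: nat and K K' K'' :: cmi
  assumes "wf_cmi n K" and "wf_cmi n K'"
    and "\<not> degenerate n K" and "\<not> degenerate n K'"
    and "K'' = R K K'"
  shows "(fst (can (pur K'')) \<inter> II K = {} \<and> (\<forall>P\<in>#genP K''. P \<inter> II K = {}))
       \<and> (cmi_implies n K K' \<longrightarrow>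
            II K'' = {} \<and> can (pur K'') = (fst (can (pur K'')), genP K''))
       \<and> (cmi_implies n K K' \<longrightarrow> \<not> degenerate n K'' \<longrightarrow> 2 \<le> size (genP K''))"
proof -
  have p1: "fst (can (pur K'')) \<inter> II K = {}"
    using fst_can_pur[of K''] R_disj(1)[of K K'] assms(5) by (simp add: pur_def) blast
  have p2: "\<forall>P\<in>#genP K''. P \<inter> II K = {}"
  proof
    fix P assume "P \<in># genP K''"
    then have "P \<subseteq> \<Union>(set_mset (snd K''))" by (rule genP_sub)
    then show "P \<inter> II K = {}" using R_disj(2)[of _ K K'] assms(5) by blast
  qed
  have II0: "II K'' = {}" if imp: "cmi_implies n K K'"
  proof -
    have D: "II K' - II K = {}" using implies_II[OF imp] by blast
    define Ts where "Ts = filter_mset (\<lambda>T. T \<noteq> {}) (image_mset (\<lambda>P. P - II K) (genP K'))"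
    have KR: "K'' = (if size Ts \<le> 1 then degCMI else (fst (can (pur K')) - II K, Ts))"
      using assms(5) D unfolding R_def Let_def Ts_def[symmetric] by simp
    show ?thesis
    proof (cases "size Ts \<le> 1")
      case True
      then show ?thesis using KR by (simp add: II_def degCMI_def pur_def IIcoll_def)
    next
      case False
      have "cnt j (snd (pur K'')) \<le> 1" for j
      proof -
        have "cnt j (snd (pur K'')) \<le> cnt j (snd K'')" by (rule cnt_pur_le)
        also have "\<dots> = cnt j Ts" using KR False by simp
        also have "\<dots> \<le> cnt j (image_mset (\<lambda>P. P - II K) (genP K'))"
          unfolding Ts_def by (rule cnt_filter_le)
        also have "\<dots> \<le> cnt j (genP K')" by (rule cnt_image_le) blast
        also have "\<dots> \<le> 1" by (rule genP_cnt)
        finally show ?thesis .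
      qed
      then show ?thesis unfolding II_def by (rule IIcoll_empty)
    qed
  qed
  have gc: "genP K'' = snd (can (pur K''))" if "II K'' = {}"
    using that unfolding genP_def Let_def by simp
  have p3: "2 \<le> size (genP K'')" if imp: "cmi_implies n K K'" and nd: "\<not> degenerate n K''"
  proof -
    have i0: "IIcoll (snd (pur K'')) = {}" using II0[OF imp] unfolding II_def .
    have s: "\<not> size (snd (pur K'')) \<le> 1" using degen_small nd by blast
    have ne: "\<And>Q. Q \<in># snd (pur K'') \<Longrightarrow> Q \<noteq> {}" unfolding pur_def by auto
    have fm: "filter_mset (\<lambda>P. P \<noteq> {}) (snd (pur K'')) = snd (pur K'')"
      using ne by (simp add: filter_mset_eq_conv)
    have "snd (can (pur K'')) = snd (pur K'')"
      using s fm unfolding can_def Let_def i0 by simp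
    then show ?thesis using gc[OF II0[OF imp]] s by simp
  qed
  show ?thesis using p1 p2 II0 gc p3 by auto
qed

end
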